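(* For all complex $q$ with $|q|<1$, $$\sum_{n\ge0}\sum_{m\ge0}(-1)^m q^{\frac{n(n+3)}{2}+2nm+2m(m+1)}-\sum_{n<0}\sum_{m<0}(-1)^m q^{\frac{n(n+3)}{2}+2nm+2m(m+1)}=\frac{2(q^2;q^2)_\infty}{(1+q)(q;q^2)_\infty}-\frac{(q^2;q^2)_\infty}{(1+q)(-q^2;q^2)_\infty},$$ where the second double sum runs over all pairs of negative integers $n,m$.
   Context: For $n\in\mathbb N_0\cup\{\infty\}$, $(a;q)_n:=\prod_{j=0}^{n-1}(1-aq^j)$. *)

theory Defs
  imports "HOL-Analysis.Analysis"
begin

definition qpoch_inf :: "complex \<Rightarrow> complex \<Rightarrow> complex" where
  "qpoch_inf a q = (\<Prod>j. (1 - a * q ^ j))"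

text \<open>The exponent n(n+3)/2 + 2nm + 2m(m+1) (always an integer).\<close>
definition expo :: "int \<Rightarrow> int \<Rightarrow> int" where
  "expo n m = n * (n + 3) div 2 + 2 * n * m + 2 * m * (m + 1)"

end

theory Submission
  imports Defs
begin


definition qp :: "complex \<Rightarrow> nat \<Rightarrow> complex" where
  "qp q n = (\<Prod>i<n. 1 - q^Suc i)"

fun qbin :: "complex \<Rightarrow> nat \<Rightarrow> nat \<Rightarrow> complex" where
  "qbin q 0 k = (if k = 0 then 1 else 0)"
| "qbin q (Suc n) 0 = 1"
| "qbin q (Suc n) (Suc k) = qbin q n (Suc k) + q^(n-k) * qbin q n k"

lemma qbin_gt: "n < k \<Longrightarrow> qbin q n k = 0"
proof (induction n arbitrary: k)
  case 0 then show ?case by simp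
next
  case (Suc n) then show ?case by (cases k) auto
qed

lemma qbin_diag: "qbin q n n = 1"
  by (induction n) (auto simp: qbin_gt)

lemma qbin_0 [simp]: "qbin q n 0 = 1" by (cases n) auto

lemma qp_Suc: "qp q (Suc n) = qp q n * (1 - q^Suc n)"
  by (simp add: qp_def)

lemma qbin_prod: "k \<le> n \<Longrightarrow> qbin q n k * qp q k * qp q (n-k) = qp q n"
proof (induction n arbitrary: k)
  case 0 then show ?case by (simp add: qp_def)
next
  case (Suc n)
  show ?case
  proof (cases k)
    case 0 then show ?thesis by (simp add: qp_def)
  next
    case (Suc k')
    show ?thesis
    proof (cases "k' = n")
      case True
      then show ?thesis using Suc by (simp add: qbin_gt qbin_diag qp_def)
    next
      case False
      with Suc \<open>k \<le> Suc n\<close> have kn: "k' < n" by simp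
      have h1: "qbin q n (Suc k') * qp q (Suc k') * qp q (n - Suc k') = qp q n"
        using Suc.IH kn by simp
      have h2: "qbin q n k' * qp q k' * qp q (n - k') = qp q n"
        using Suc.IH kn by simp
      have e: "n - k' = Suc (n - Suc k')" using kn by simp
      have e2: "qp q (n-k') = qp q (n - Suc k') * (1 - q^(n-k'))"
        using qp_Suc[of q "n - Suc k'"] e by simp
      have "qbin q (Suc n) k * qp q k * qp q (Suc n - k)
          = qbin q n (Suc k') * qp q (Suc k') * qp q (n - k')
            + q^(n-k') * (qbin q n k' * qp q k' * qp q (n - k')) * (1 - q^Suc k')"
        using Suc by (simp add: qp_Suc algebra_simps)
      also have "qbin q n (Suc k') * qp q (Suc k') * qp q (n - k') = qp q n * (1 - q^(n-k'))"
        using h1 unfolding e2 by (simp add: algebra_simps)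
      also have "q^(n-k') * (qbin q n k' * qp q k' * qp q (n - k')) * (1 - q^Suc k')
          = q^(n-k') * qp q n * (1 - q^Suc k')" using h2 by simp
      also have "qp q n * (1 - q^(n-k')) + q^(n-k') * qp q n * (1 - q^Suc k') = qp q n * (1 - q^(n - k' + Suc k'))"
        by (simp add: algebra_simps power_add)
      also have "n - k' + Suc k' = Suc n" using kn by simp
      finally show ?thesis by (simp add: qp_Suc)
    qed
  qed
qed

lemma tri_Suc: "Suc k * k div 2 = k * (k - 1) div 2 + k"
proof -
  have "Suc k * k = k * (k - 1) + 2 * k" by (cases k) (auto simp: algebra_simps)
  then show ?thesis by simp
qed

lemma qbinom: "(\<Prod>i<n. 1 + z * q^i) = (\<Sum>k\<le>n. qbin q n k * q^(k*(k-1) div 2) * z^k)"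
proof (induction n)
  case 0 then show ?case by simp
next
  case (Suc n)
  have "(\<Prod>i<Suc n. 1 + z * q^i) = (\<Sum>k\<le>n. qbin q n k * q^(k*(k-1) div 2) * z^k) * (1 + z*q^n)"
    using Suc by simp
  also have "\<dots> = (\<Sum>k\<le>n. qbin q n k * q^(k*(k-1) div 2) * z^k)
       + (\<Sum>k\<le>n. q^(n-k) * qbin q n k * q^(Suc k * k div 2) * z^Suc k)"
  proof -
    have "(\<Sum>k\<le>n. qbin q n k * q^(k*(k-1) div 2) * z^k) * (z*q^n)
        = (\<Sum>k\<le>n. q^(n-k) * qbin q n k * q^(Suc k * k div 2) * z^Suc k)"
      unfolding sum_distrib_right
    proof (rule sum.cong[OF refl])
      fix k assume "k \<in> {..n}"
      then have "q^n = q^(n-k) * q^k" by (simp add: power_add[symmetric])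
      moreover have "q^(k*(k-1) div 2) * q^k = q^(Suc k * k div 2)" by (simp only: tri_Suc power_add)
      ultimately show "qbin q n k * q ^ (k * (k - 1) div 2) * z ^ k * (z * q ^ n) =
         q ^ (n - k) * qbin q n k * q ^ (Suc k * k div 2) * z ^ Suc k"
        by (simp add: algebra_simps)
    qed
    then show ?thesis by (simp add: algebra_simps)
  qed
  also have "\<dots> = (\<Sum>k\<le>Suc n. qbin q (Suc n) k * q^(k*(k-1) div 2) * z^k)"
  proof -
    have A: "(\<Sum>k\<le>n. qbin q n k * q^(k*(k-1) div 2) * z^k) = 1 + (\<Sum>k\<le>n. qbin q n (Suc k) * q^(Suc k * k div 2) * z^Suc k)"
    proof -
      have "(\<Sum>k\<le>Suc n. qbin q n k * q^(k*(k-1) div 2) * z^k) = 1 + (\<Sum>k\<le>n. qbin q n (Suc k) * q^(Suc k * k div 2) * z^Suc k)"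
        by (subst sum.atMost_Suc_shift) (simp add: qbin_gt)
      moreover have "(\<Sum>k\<le>Suc n. qbin q n k * q^(k*(k-1) div 2) * z^k) = (\<Sum>k\<le>n. qbin q n k * q^(k*(k-1) div 2) * z^k)"
        by (simp add: qbin_gt)
      ultimately show ?thesis by simp
    qed
    have B: "(\<Sum>k\<le>n. qbin q (Suc n) (Suc k) * q^(Suc k * (Suc k - 1) div 2) * z^Suc k)
       = (\<Sum>k\<le>n. qbin q n (Suc k) * q^(Suc k * k div 2) * z^Suc k)
         + (\<Sum>k\<le>n. q^(n-k) * qbin q n k * q^(Suc k * k div 2) * z^Suc k)"
      by (simp only: qbin.simps diff_Suc_1 sum.distrib[symmetric] distrib_right)
    show ?thesis
      by (subst sum.atMost_Suc_shift) (simp only: A B qbin_0, simp)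
  qed
  finally show ?case .
qed

lemma prod_lessThan_add: "(\<Prod>i<N+(M::nat). f i) = (\<Prod>i<N. f i) * (\<Prod>i<M. f (N+i))"
  by (induction M) (auto simp: algebra_simps)

lemma sum_split_2N: "(\<Sum>k\<le>2*N. g k) = (\<Sum>j\<le>N. g (N+j)) + (\<Sum>j<N. g (N - Suc j))"
proof -
  have U: "{..2*N} = (\<lambda>j. N+j) ` {..N} \<union> {..<N}"
  proof (rule set_eqI, rule iffI)
    fix k assume "k \<in> {..2*N}"
    then show "k \<in> (\<lambda>j. N+j) ` {..N} \<union> {..<N}"
      by (cases "N \<le> k") (auto intro!: image_eqI[where x="k-N"])
  qed auto
  have "(\<Sum>k\<le>2*N. g k) = (\<Sum>k\<in>(\<lambda>j. N+j) ` {..N}. g k) + (\<Sum>k<N. g k)"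
    unfolding U by (rule sum.union_disjoint) auto
  also have "(\<Sum>k\<in>(\<lambda>j. N+j) ` {..N}. g k) = (\<Sum>j\<le>N. g (N+j))"
    by (subst sum.reindex) (auto simp: inj_on_def)
  also have "(\<Sum>k<N. g k) = (\<Sum>j<N. g (N - Suc j))"
    by (rule sum.nat_diff_reindex[symmetric])
  finally show ?thesis .
qed

lemma two_tri: "2 * (n * (n - 1) div 2) = n * (n - 1::nat)"
proof -
  have "even (n * (n - 1))" by (cases n) auto
  then show ?thesis by simp
qed

lemma tri_sum: "(\<Sum>i<N. Suc i) = Suc N * N div 2"
  by (induction N) (auto simp: tri_Suc)

lemma expo_id1: "Suc N * N div 2 + (N+j) * (N+j-1) div 2 = N * (N+j) + j * (j-1) div 2"
proof -
  have a: "2 * (Suc N * N div 2) = Suc N * N" using two_tri[of "Suc N"] by simp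
  have b: "2 * ((N+j) * (N+j-1) div 2) = (N+j) * (N+j-1)" by (rule two_tri)
  have c: "2 * (j * (j-1) div 2) = j * (j-1)" by (rule two_tri)
  have d: "Suc N * N + (N+j) * (N+j-1) = 2 * (N * (N+j)) + j * (j-1)"
  proof (cases j)
    case 0 then show ?thesis by (cases N) (simp_all add: algebra_simps)
  next
    case (Suc j') then show ?thesis by (simp add: algebra_simps)
  qed
  have "2 * (Suc N * N div 2 + (N+j) * (N+j-1) div 2) = 2 * (N * (N+j) + j * (j-1) div 2)"
    by (simp only: add_mult_distrib2 a b c d)
  then show ?thesis by (rule mult_left_cancel[THEN iffD1, rotated]) simp
qed

lemma dd: "Suc (a+m) * (a+m) + m*(m-1) = 2*((a+m)*m) + a*Suc (a::nat)"
  by (cases m) (simp_all add: algebra_simps)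

lemma expo_id2: "j < N \<Longrightarrow> Suc N * N div 2 + (N - Suc j) * (N - Suc j - 1) div 2 = N * (N - Suc j) + Suc j * Suc (Suc j) div 2"
proof -
  assume jN: "j < N"
  then obtain m where m: "N = Suc j + m" using less_imp_Suc_add by blast
  have a: "2 * (Suc N * N div 2) = Suc N * N" using two_tri[of "Suc N"] by simp
  have b: "2 * (m * (m-1) div 2) = m * (m-1)" by (rule two_tri)
  have c: "2 * (Suc j * Suc (Suc j) div 2) = Suc j * Suc (Suc j)" using two_tri[of "Suc (Suc j)"] by (simp add: mult.commute)
  have d: "Suc N * N + m * (m-1) = 2 * (N * m) + Suc j * Suc (Suc j)"
    unfolding m by (rule dd)
  have e: "N - Suc j = m" using m by simp
  have "2 * (Suc N * N div 2 + m * (m-1) div 2) = 2 * (N * m + Suc j * Suc (Suc j) div 2)"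
    by (simp only: add_mult_distrib2 a b c d)
  then have "Suc N * N div 2 + m * (m-1) div 2 = N * m + Suc j * Suc (Suc j) div 2"
    by (rule mult_left_cancel[THEN iffD1, rotated]) simp
  then show ?thesis unfolding e .
qed

lemma aux_alg: "(w::complex) \<noteq> 0 \<Longrightarrow> D * E = Q * X \<Longrightarrow> Z * Q = w^N * W \<Longrightarrow> D / w^N * (c * E * Z) = c * X * W"
proof -
  assume w: "w \<noteq> 0" and a: "D * E = Q * X" and b: "Z * Q = w^N * W"
  have "D / w^N * (c * E * Z) = c * X * (Z * Q) / w^N" using a by (simp add: algebra_simps)
  also have "\<dots> = c * X * W" using w b by simp
  finally show ?thesis .
qed

lemma finite_jacobi:
  fixes q w :: complex
  assumes q: "q \<noteq> 0" and w: "w \<noteq> 0"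
  shows "(\<Prod>i<N. 1 + w*q^i) * (\<Prod>i<N. 1 + q^Suc i / w)
       = (\<Sum>j\<le>N. qbin q (2*N) (N+j) * q^(j*(j-1) div 2) * w^j)
         + (\<Sum>j<N. qbin q (2*N) (N - Suc j) * q^(Suc j * Suc (Suc j) div 2) / w^Suc j)"
proof -
  define z where "z = w / q^N"
  define D where "D = q^(Suc N * N div 2)"
  have D: "D = (\<Prod>i<N. q^Suc i)" unfolding D_def tri_sum[symmetric] power_sum ..
  have Dnz: "D \<noteq> 0" using q by (simp add: D_def)
  have "(\<Prod>i<2*N. 1 + z*q^i) = (\<Prod>i<N. 1 + z*q^i) * (\<Prod>i<N. 1 + z*q^(N+i))"
    using prod_lessThan_add[of "\<lambda>i. 1 + z*q^i" N N] by (simp add: mult_2)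
  also have "(\<Prod>i<N. 1 + z*q^(N+i)) = (\<Prod>i<N. 1 + w*q^i)"
    using q by (simp add: z_def power_add)
  also have "(\<Prod>i<N. 1 + z*q^i) = (\<Prod>i<N. 1 + z*q^(N - Suc i))"
    by (rule prod.nat_diff_reindex[symmetric])
  also have "\<dots> = (\<Prod>i<N. (w / q^Suc i) * (1 + q^Suc i / w))"
  proof (rule prod.cong[OF refl])
    fix i assume "i \<in> {..<N}"
    then have "N = (N - Suc i) + Suc i" by simp
    then have "q^N = q^(N - Suc i) * q^Suc i" by (metis power_add)
    then show "1 + z*q^(N - Suc i) = (w / q^Suc i) * (1 + q^Suc i / w)"
      using q w by (simp add: z_def field_simps)
  qed
  also have "\<dots> = w^N / D * (\<Prod>i<N. 1 + q^Suc i / w)"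
    by (simp add: prod.distrib D prod_dividef)
  finally have L: "(\<Prod>i<2*N. 1 + z*q^i) = w^N / D * ((\<Prod>i<N. 1 + w*q^i) * (\<Prod>i<N. 1 + q^Suc i / w))"
    by (simp add: algebra_simps)
  define g where "g k = qbin q (2*N) k * q^(k*(k-1) div 2) * z^k" for k
  have R: "(\<Prod>i<2*N. 1 + z*q^i) = (\<Sum>j\<le>N. g (N+j)) + (\<Sum>j<N. g (N - Suc j))"
    unfolding qbinom g_def[symmetric] by (rule sum_split_2N)
  have g1: "D / w^N * g (N+j) = qbin q (2*N) (N+j) * q^(j*(j-1) div 2) * w^j" for j
  proof -
    have E: "D * q^((N+j)*(N+j-1) div 2) = q^(N*(N+j)) * q^(j*(j-1) div 2)"
      unfolding D_def power_add[symmetric] expo_id1 ..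
    have Z: "z^(N+j) * q^(N*(N+j)) = w^N * w^j"
      using q by (simp add: z_def power_divide power_mult power_add[symmetric])
    show ?thesis unfolding g_def using aux_alg[OF w E Z] by simp
  qed
  have g2: "D / w^N * g (N - Suc j) = qbin q (2*N) (N - Suc j) * q^(Suc j * Suc (Suc j) div 2) / w^Suc j" if "j < N" for j
  proof -
    have "D * q^((N - Suc j)*(N - Suc j - 1) div 2) = q^(N*(N - Suc j)) * q^(Suc j * Suc (Suc j) div 2)"
      unfolding D_def power_add[symmetric] expo_id2[OF that] ..
    moreover have "z^(N - Suc j) = w^(N - Suc j) / q^(N*(N - Suc j))" by (simp add: z_def power_divide power_mult)
    moreover have "w^N = w^(N - Suc j) * w^Suc j"
    proof -
      have "N = (N - Suc j) + Suc j" using that by simp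
      then show ?thesis by (metis power_add)
    qed
    ultimately show ?thesis using q w unfolding g_def
      by (simp add: field_simps)
  qed
  have "(\<Prod>i<N. 1 + w*q^i) * (\<Prod>i<N. 1 + q^Suc i / w) = D / w^N * (\<Prod>i<2*N. 1 + z*q^i)"
    unfolding L using Dnz w by simp
  also have "\<dots> = (\<Sum>j\<le>N. D / w^N * g (N+j)) + (\<Sum>j<N. D / w^N * g (N - Suc j))"
    unfolding R by (simp add: distrib_left sum_distrib_left)
  also have "\<dots> = (\<Sum>j\<le>N. qbin q (2*N) (N+j) * q^(j*(j-1) div 2) * w^j)
         + (\<Sum>j<N. qbin q (2*N) (N - Suc j) * q^(Suc j * Suc (Suc j) div 2) / w^Suc j)"
    using g1 g2 by simp
  finally show ?thesis .
qed



lemma conv_qp: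
  fixes a b :: complex
  assumes "norm b < 1"
  shows "convergent_prod (\<lambda>j. 1 - a * b^j)"
proof -
  have "summable (\<lambda>j. norm a * norm b ^ j)"
    using assms by (intro summable_mult summable_geometric) auto
  then have "summable (\<lambda>j. norm ((1 - a * b^j) - 1))"
    by (simp add: norm_mult norm_power)
  then show ?thesis
    by (intro abs_convergent_prod_imp_convergent_prod summable_imp_abs_convergent_prod)
qed

lemma nz_qp:
  fixes a b :: complex
  assumes "norm b < 1" "\<And>j. a * b^j \<noteq> 1"
  shows "qpoch_inf a b \<noteq> 0"
  unfolding qpoch_inf_def
  by (rule prodinf_nonzero[OF conv_qp[OF assms(1)]]) (use assms(2) in \<open>auto simp: right_minus_eq\<close>)

lemma lim_qp:
  fixes a b :: complex
  assumes "norm b < 1"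
  shows "(\<lambda>n. \<Prod>j<n. 1 - a * b^j) \<longlonglongrightarrow> qpoch_inf a b"
  unfolding qpoch_inf_def LIMSEQ_lessThan_iff_atMost
  by (rule convergent_prod_LIMSEQ[OF conv_qp[OF assms]])

lemma prod_even_odd: "(\<Prod>j<2*(n::nat). f j) = (\<Prod>j<n. f (2*j)) * (\<Prod>j<n. f (2*j+1))"
  by (induction n) (auto simp: algebra_simps)

lemma qpoch_split:
  fixes a b :: complex
  assumes "norm b < 1"
  shows "qpoch_inf a b = qpoch_inf a (b^2) * qpoch_inf (a*b) (b^2)"
proof -
  have b2: "norm (b^2) < 1" using assms by (simp add: norm_power power_less_one_iff)
  have "(\<lambda>n. \<Prod>j<2*n. 1 - a * b^j) \<longlonglongrightarrow> qpoch_inf a b"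
  proof -
    have "strict_mono (\<lambda>n::nat. 2*n)" by (auto simp: strict_mono_def)
    from LIMSEQ_subseq_LIMSEQ[OF lim_qp[OF assms, of a] this] show ?thesis by (simp add: o_def)
  qed
  moreover have "(\<lambda>n. \<Prod>j<2*n. 1 - a * b^j) = (\<lambda>n. (\<Prod>j<n. 1 - a * (b^2)^j) * (\<Prod>j<n. 1 - (a*b) * (b^2)^j))"
    by (simp add: prod_even_odd power_mult mult.assoc)
  moreover have "(\<lambda>n. (\<Prod>j<n. 1 - a * (b^2)^j) * (\<Prod>j<n. 1 - (a*b) * (b^2)^j)) \<longlonglongrightarrow> qpoch_inf a (b^2) * qpoch_inf (a*b) (b^2)"
    by (intro tendsto_mult lim_qp b2)
  ultimately show ?thesis using LIMSEQ_unique by metis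
qed

lemma qpoch_pm:
  fixes a b :: complex
  assumes "norm b < 1"
  shows "qpoch_inf a b * qpoch_inf (-a) b = qpoch_inf (a^2) (b^2)"
proof -
  have e: "(1 - a * b^n) * (1 - (-a) * b^n) = 1 - a^2 * (b^2)^n" for n
  proof -
    have "(b^2)^n = b^n * b^n" by (simp add: power_mult_distrib power2_eq_square)
    then show ?thesis by (simp add: power2_eq_square algebra_simps)
  qed
  show ?thesis
    unfolding qpoch_inf_def prodinf_mult[OF conv_qp[OF assms] conv_qp[OF assms]] e ..
qed

lemma qp_eq: "qp q n = (\<Prod>j<n. 1 - q * q^j)"
  by (simp add: qp_def)

lemma qp_nz: assumes "norm (q::complex) < 1" shows "qp q n \<noteq> 0"
proof -
  have "q^Suc i \<noteq> 1" for i
  proof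
    assume "q^Suc i = 1"
    then have "norm q ^ Suc i = 1" by (metis norm_one norm_power)
    moreover have "norm q ^ Suc i < 1" using assms by (intro power_less_one_iff[THEN iffD2]) auto
    ultimately show False by simp
  qed
  then show ?thesis by (auto simp: qp_def)
qed

lemma lim_qpn: assumes "norm (q::complex) < 1" shows "qp q \<longlonglongrightarrow> qpoch_inf q q"
  unfolding qp_eq by (rule lim_qp[OF assms])

lemma qpinf_nz: assumes "norm (q::complex) < 1" shows "qpoch_inf q q \<noteq> 0"
proof (rule nz_qp[OF assms])
  fix j show "q * q^j \<noteq> 1"
  proof
    assume "q*q^j = 1"
    then have "norm q ^ Suc j = 1" by (metis norm_one norm_power power_Suc)
    moreover have "norm q ^ Suc j < 1" using assms by (intro power_less_one_iff[THEN iffD2]) auto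
    ultimately show False by simp
  qed
qed

lemma qbin_eq: assumes "norm (q::complex) < 1" "k \<le> n"
  shows "qbin q n k = qp q n / (qp q k * qp q (n-k))"
  using qbin_prod[OF assms(2), of q] qp_nz[OF assms(1)] by (simp add: field_simps)

lemma qbin_bound: assumes "norm (q::complex) < 1"
  obtains M where "M > 0" "\<And>n k. norm (qbin q n k) \<le> M"
proof -
  have c1: "convergent (qp q)" using lim_qpn[OF assms] by (auto simp: convergent_def)
  have "(\<lambda>n. inverse (qp q n)) \<longlonglongrightarrow> inverse (qpoch_inf q q)"
    by (intro tendsto_inverse lim_qpn assms qpinf_nz)
  then have c2: "convergent (\<lambda>n. inverse (qp q n))" by (auto simp: convergent_def)
  obtain B1 where B1: "B1 > 0" "\<And>n. norm (qp q n) \<le> B1"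
    using convergent_imp_Bseq[OF c1] by (auto simp: Bseq_def)
  obtain B2 where B2: "B2 > 0" "\<And>n. norm (inverse (qp q n)) \<le> B2"
    using convergent_imp_Bseq[OF c2] by (auto simp: Bseq_def)
  have "norm (qbin q n k) \<le> B1 * B2 * B2" for n k
  proof (cases "k \<le> n")
    case True
    have "qbin q n k = qp q n * inverse (qp q k) * inverse (qp q (n-k))"
      using qbin_eq[OF assms True] by (simp add: field_simps)
    then have "norm (qbin q n k) = norm (qp q n) * norm (inverse (qp q k)) * norm (inverse (qp q (n-k)))"
      by (simp add: norm_mult)
    also have "\<dots> \<le> B1 * B2 * B2"
      using B1(1) B2(1) by (intro mult_mono B1(2) B2(2)) auto
    finally show ?thesis .
  next
    case False
    then show ?thesis using B1 B2 by (simp add: qbin_gt)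
  qed
  then show ?thesis using that[of "B1*B2*B2"] B1 B2 by auto
qed

lemma lim_qbin1: assumes "norm (q::complex) < 1"
  shows "(\<lambda>N. qbin q (2*N) (N+j)) \<longlonglongrightarrow> 1 / qpoch_inf q q"
proof -
  let ?P = "qpoch_inf q q"
  have lim: "(\<lambda>N. qp q (2*N) / (qp q (N+j) * qp q (N-j))) \<longlonglongrightarrow> ?P / (?P * ?P)"
  proof (intro tendsto_divide tendsto_mult)
    show "(\<lambda>N. qp q (2*N)) \<longlonglongrightarrow> ?P"
      by (rule filterlim_compose[OF lim_qpn[OF assms]]) (intro filterlim_subseq, auto simp: strict_mono_def)
    show "(\<lambda>N. qp q (N+j)) \<longlonglongrightarrow> ?P"
      by (rule filterlim_compose[OF lim_qpn[OF assms]]) (rule filterlim_add_const_nat_at_top)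
    show "(\<lambda>N. qp q (N-j)) \<longlonglongrightarrow> ?P"
      by (rule filterlim_compose[OF lim_qpn[OF assms]]) (rule filterlim_minus_const_nat_at_top)
  qed (use qpinf_nz[OF assms] in simp)
  have ev: "eventually (\<lambda>N. qp q (2*N) / (qp q (N+j) * qp q (N-j)) = qbin q (2*N) (N+j)) sequentially"
    using eventually_ge_at_top[of j]
  proof eventually_elim
    case (elim N)
    then have "2*N - (N+j) = N - j" by simp
    then show ?case using qbin_eq[OF assms, of "N+j" "2*N"] elim by simp
  qed
  have "?P / (?P * ?P) = 1 / ?P" using qpinf_nz[OF assms] by simp
  then show ?thesis using Lim_transform_eventually[OF lim ev] by simp
qed

lemma lim_qbin2: assumes "norm (q::complex) < 1"
  shows "(\<lambda>N. qbin q (2*N) (N - Suc j)) \<longlonglongrightarrow> 1 / qpoch_inf q q"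
proof -
  let ?P = "qpoch_inf q q"
  have lim: "(\<lambda>N. qp q (2*N) / (qp q (N - Suc j) * qp q (N + Suc j))) \<longlonglongrightarrow> ?P / (?P * ?P)"
  proof (intro tendsto_divide tendsto_mult)
    show "(\<lambda>N. qp q (2*N)) \<longlonglongrightarrow> ?P"
      by (rule filterlim_compose[OF lim_qpn[OF assms]]) (intro filterlim_subseq, auto simp: strict_mono_def)
    show "(\<lambda>N. qp q (N + Suc j)) \<longlonglongrightarrow> ?P"
      by (rule filterlim_compose[OF lim_qpn[OF assms]]) (rule filterlim_add_const_nat_at_top)
    show "(\<lambda>N. qp q (N - Suc j)) \<longlonglongrightarrow> ?P"
      by (rule filterlim_compose[OF lim_qpn[OF assms]]) (rule filterlim_minus_const_nat_at_top)
  qed (use qpinf_nz[OF assms] in simp)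
  have ev: "eventually (\<lambda>N. qp q (2*N) / (qp q (N - Suc j) * qp q (N + Suc j)) = qbin q (2*N) (N - Suc j)) sequentially"
    using eventually_ge_at_top[of "Suc j"]
  proof eventually_elim
    case (elim N)
    then have "2*N - (N - Suc j) = N + Suc j" by simp
    then show ?case using qbin_eq[OF assms, of "N - Suc j" "2*N"] elim by simp
  qed
  have "?P / (?P * ?P) = 1 / ?P" using qpinf_nz[OF assms] by simp
  then show ?thesis using Lim_transform_eventually[OF lim ev] by simp
qed

lemma tannery_sum:
  fixes c :: "nat \<Rightarrow> nat \<Rightarrow> complex" and t :: "nat \<Rightarrow> complex"
  assumes bound: "\<And>N j. norm (c N j) \<le> M"
    and lim: "\<And>j. (\<lambda>N. c N j) \<longlonglongrightarrow> L"
    and sm: "summable (\<lambda>j. norm (t j))"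
  shows "(\<lambda>N. \<Sum>j<N+d. c N j * t j) \<longlonglongrightarrow> L * suminf t"
proof -
  define a where "a j N = (if j < N + d then c N j * t j else 0)" for j N
  have fin: "(\<Sum>j<N+d. c N j * t j) = (\<Sum>j. a j N)" for N
  proof -
    have "(\<Sum>j. a j N) = sum (\<lambda>j. a j N) {..<N+d}"
      by (rule suminf_finite) (auto simp: a_def)
    also have "\<dots> = (\<Sum>j<N+d. c N j * t j)" by (rule sum.cong) (auto simp: a_def)
    finally show ?thesis by simp
  qed
  have T: "eventually (\<lambda>n. summable (\<lambda>k. norm (a k n))) sequentially \<and>
           summable (\<lambda>n. norm (L * t n)) \<and>
           ((\<lambda>n. suminf (\<lambda>k. a k n)) \<longlongrightarrow> suminf (\<lambda>k. L * t k)) sequentially"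
  proof (rule tannerys_theorem)
    fix k
    have "(\<lambda>N. c N k * t k) \<longlonglongrightarrow> L * t k" by (intro tendsto_intros lim)
    moreover have "eventually (\<lambda>N. c N k * t k = a k N) sequentially"
      using eventually_gt_at_top[of k] by eventually_elim (auto simp: a_def)
    ultimately show "(\<lambda>N. a k N) \<longlonglongrightarrow> L * t k" by (rule Lim_transform_eventually)
  next
    show "eventually (\<lambda>(k,n). norm (a k n) \<le> M * norm (t k)) (at_top \<times>\<^sub>F sequentially)"
    proof (rule always_eventually, clarify)
      fix k n
      have M0: "0 \<le> M" using order.trans[OF norm_ge_zero bound] .
      show "norm (a k n) \<le> M * norm (t k)"
        using M0 by (auto simp: a_def norm_mult intro!: mult_right_mono bound)
    qed
  next
    show "summable (\<lambda>k. M * norm (t k))" by (intro summable_mult sm)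
  qed auto
  have "suminf (\<lambda>k. L * t k) = L * suminf t"
    by (rule suminf_mult) (rule summable_norm_cancel[OF sm])
  then show ?thesis using T unfolding fin by simp
qed

lemma jacobi_inf:
  fixes q w :: complex
  assumes q: "q \<noteq> 0" "norm q < 1" and w: "w \<noteq> 0"
    and s1: "summable (\<lambda>j. norm (q^(j*(j-1) div 2) * w^j))"
    and s2: "summable (\<lambda>j. norm (q^(Suc j * Suc (Suc j) div 2) / w^Suc j))"
  shows "qpoch_inf (-w) q * qpoch_inf (-(q/w)) q * qpoch_inf q q
       = (\<Sum>j. q^(j*(j-1) div 2) * w^j) + (\<Sum>j. q^(Suc j * Suc (Suc j) div 2) / w^Suc j)"
proof -
  let ?P = "qpoch_inf q q"
  define t1 where "t1 j = q^(j*(j-1) div 2) * w^j" for j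
  define t2 where "t2 j = q^(Suc j * Suc (Suc j) div 2) / w^Suc j" for j
  obtain M where M: "M > 0" "\<And>n k. norm (qbin q n k) \<le> M" using qbin_bound[OF q(2)] by blast
  have L1: "(\<lambda>N. \<Sum>j<N+1. qbin q (2*N) (N+j) * t1 j) \<longlonglongrightarrow> 1 / ?P * suminf t1"
    by (rule tannery_sum[OF M(2) lim_qbin1[OF q(2)]]) (use s1 in \<open>simp add: t1_def\<close>)
  have L2: "(\<lambda>N. \<Sum>j<N+0. qbin q (2*N) (N - Suc j) * t2 j) \<longlonglongrightarrow> 1 / ?P * suminf t2"
    by (rule tannery_sum[OF M(2) lim_qbin2[OF q(2)]]) (use s2 in \<open>simp add: t2_def\<close>)
  have R: "(\<lambda>N. (\<Prod>i<N. 1 + w*q^i) * (\<Prod>i<N. 1 + q^Suc i / w)) \<longlonglongrightarrow> 1 / ?P * suminf t1 + 1 / ?P * suminf t2"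
  proof -
    have "(\<Prod>i<N. 1 + w*q^i) * (\<Prod>i<N. 1 + q^Suc i / w)
        = (\<Sum>j<N+1. qbin q (2*N) (N+j) * t1 j) + (\<Sum>j<N+0. qbin q (2*N) (N - Suc j) * t2 j)" for N
      unfolding finite_jacobi[OF q(1) w] t1_def t2_def
      by (simp add: lessThan_Suc_atMost mult.assoc)
    then show ?thesis using tendsto_add[OF L1 L2] by simp
  qed
  have Lp: "(\<lambda>N. (\<Prod>i<N. 1 + w*q^i) * (\<Prod>i<N. 1 + q^Suc i / w)) \<longlonglongrightarrow> qpoch_inf (-w) q * qpoch_inf (-(q/w)) q"
  proof -
    have "(\<Prod>i<N. 1 + w*q^i) * (\<Prod>i<N. 1 + q^Suc i / w) = (\<Prod>i<N. 1 - (-w)*q^i) * (\<Prod>i<N. 1 - (-(q/w))*q^i)" for N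
      by simp
    then show ?thesis using tendsto_mult[OF lim_qp[OF q(2), of "-w"] lim_qp[OF q(2), of "-(q/w)"]] by simp
  qed
  have "qpoch_inf (-w) q * qpoch_inf (-(q/w)) q = 1 / ?P * suminf t1 + 1 / ?P * suminf t2"
    using LIMSEQ_unique[OF Lp R] .
  then show ?thesis using qpinf_nz[OF q(2)] unfolding t1_def t2_def by (simp add: field_simps)
qed



lemma pow_le_geo: "norm (q::complex) < 1 \<Longrightarrow> j \<le> e \<Longrightarrow> norm (q^e) \<le> norm q ^ j"
  by (simp add: norm_power power_decreasing)

lemma tri_ge: "j \<le> Suc j * j div 2"
  using tri_Suc[of j] by simp

lemma G_identity:
  fixes q :: complex
  assumes q: "q \<noteq> 0" "norm q < 1"
  shows "(\<Sum>j. q^(Suc j * j div 2)) = qpoch_inf (q^2) (q^2) / qpoch_inf q (q^2)"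
proof -
  define g where "g j = q^(Suc j * j div 2)" for j
  have gb: "norm (g j) \<le> norm q ^ j" for j
    unfolding g_def by (rule pow_le_geo[OF q(2) tri_ge])
  have sg: "summable (\<lambda>j. norm (g j))"
    by (rule summable_comparison_test'[OF summable_geometric[of "norm q"], of 0])
       (use q gb in auto)
  have t1: "q^(j*(j-1) div 2) * q^j = g j" for j
    unfolding g_def tri_Suc power_add ..
  have t2: "q^(Suc j * Suc (Suc j) div 2) / q^Suc j = g j" for j
  proof -
    have "Suc j * Suc (Suc j) div 2 = Suc j * j div 2 + Suc j"
      using tri_Suc[of "Suc j"] by (simp add: mult.commute)
    then have "q^(Suc j * Suc (Suc j) div 2) = g j * q^Suc j" unfolding g_def by (simp only: power_add)
    moreover have "q^Suc j \<noteq> 0" using q by simp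
    ultimately show ?thesis by simp
  qed
  have J: "qpoch_inf (-q) q * qpoch_inf (-(q/q)) q * qpoch_inf q q = (\<Sum>j. g j) + (\<Sum>j. g j)"
    using jacobi_inf[OF q q(1)] sg unfolding t1 t2 by simp
  define X where "X = qpoch_inf (-q) q"
  define P where "P = qpoch_inf q q"
  define E where "E = qpoch_inf (q^2) (q^2)"
  define Y where "Y = qpoch_inf q (q^2)"
  have m1: "qpoch_inf (-1) q = 2 * X"
  proof -
    have c: "convergent_prod (\<lambda>j. 1 - (-1) * q^j)" by (rule conv_qp[OF q(2)])
    have "(\<Prod>j. 1 - (-1) * q^Suc j) = qpoch_inf (-1) q / 2"
      using prodinf_split_head[OF c] by (simp add: qpoch_inf_def)
    moreover have "(\<Prod>j. 1 - (-1) * q^Suc j) = X"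
      unfolding X_def qpoch_inf_def by simp
    ultimately show ?thesis by (simp add: mult.commute)
  qed
  have "X * qpoch_inf (-1) q * P = 2 * (\<Sum>j. g j)" using J q(1) unfolding X_def[symmetric] P_def[symmetric] by simp
  then have "2 * X * X * P = 2 * (\<Sum>j. g j)" unfolding m1 by (simp add: algebra_simps)
  then have G: "(\<Sum>j. g j) = X * X * P" by (simp add: mult.assoc)
  have pm: "P * X = E" unfolding P_def X_def E_def using qpoch_pm[OF q(2), of q] by simp
  have sp: "P = Y * E" unfolding P_def Y_def E_def using qpoch_split[OF q(2), of q] by (simp add: power2_eq_square)
  have q2: "norm (q^2) < 1" using q(2) by (simp add: norm_power power_less_one_iff)
  have Enz: "E \<noteq> 0" unfolding E_def
  proof (rule nz_qp[OF q2])
    fix j show "q^2 * (q^2)^j \<noteq> 1"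
    proof
      assume "q^2 * (q^2)^j = 1"
      then have "norm (q^2) ^ Suc j = 1" by (metis norm_one norm_power power_Suc)
      moreover have "norm (q^2) ^ Suc j < 1" using q2 by (intro power_less_one_iff[THEN iffD2]) auto
      ultimately show False by simp
    qed
  qed
  have "X * Y * E = 1 * E" using pm sp by (simp add: algebra_simps)
  then have XY: "X * Y = 1" using Enz by simp
  have Ynz: "Y \<noteq> 0" using XY by auto
  have X: "X = 1 / Y" using XY Ynz by (simp add: eq_divide_eq)
  have "(\<Sum>j. g j) = X * E" using G pm by (simp add: mult.commute mult.left_commute)
  also have "\<dots> = E / Y" using X by simp
  finally show ?thesis unfolding g_def E_def Y_def .
qed


lemma wp: "(-((q::complex)^2))^n = (-1)^n * q^(2*n)"
proof -
  have "-((q::complex)^2) = (-1) * q^2" by simp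
  then have "(-((q::complex)^2))^n = (-1)^n * (q^2)^n" by (simp only: power_mult_distrib)
  then show ?thesis by (simp only: power_mult)
qed
lemma Qp: "(((q::complex)^2)^2)^n = q^(4*n)"
proof -
  have "(((q::complex)^2)^2)^n = q^(2*2*n)" by (simp only: power_mult)
  then show ?thesis by simp
qed
lemma four_tri: "4 * (j * (j - 1) div 2) + 2 * j = 2 * (j::nat)^2"
proof -
  have g: "\<And>x::nat. 4*x = 2*(2*x)" by simp
  have a: "4 * (j * (j - 1) div 2) = 2 * (j * (j - 1))" unfolding g two_tri ..
  have b: "2 * (j * (j - 1)) + 2 * j = 2 * j^2" by (cases j) (simp_all add: power2_eq_square algebra_simps)
  show ?thesis unfolding a b ..
qed

lemma four_tri2: "4 * (Suc j * Suc (Suc j) div 2) = 2 * (Suc j)^2 + 2 * Suc j"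
proof -
  have a: "2 * (Suc j * Suc (Suc j) div 2) = Suc j * Suc (Suc j)"
    using two_tri[of "Suc (Suc j)"] by (simp add: mult.commute)
  have g: "\<And>x::nat. 4*x = 2*(2*x)" by simp
  have "4 * (Suc j * Suc (Suc j) div 2) = 2 * (Suc j * Suc (Suc j))"
    unfolding g a ..
  also have "\<dots> = 2 * (Suc j)^2 + 2 * Suc j" by (simp add: power2_eq_square algebra_simps)
  finally show ?thesis .
qed

lemma div_sign: "(b::complex) \<noteq> 0 \<Longrightarrow> (a * b) / ((-1)^n * b) = (-1)^n * a"
  by (cases "even n") simp_all

lemma j_le: "(j::nat) \<le> 2 * j^2"
proof -
  have "j \<le> j * j" by (rule le_square)
  then show ?thesis by (simp add: power2_eq_square)
qed

lemma T_identity: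
  fixes q :: complex
  assumes q: "q \<noteq> 0" "norm q < 1"
  shows "1 + 2 * (\<Sum>j. (-1)^Suc j * q^(2*(Suc j)^2)) = qpoch_inf (q^2) (q^2) / qpoch_inf (-(q^2)) (q^2)"
proof -
  define Q where "Q = (q^2)^2"
  define w where "w = -(q^2)"
  define t where "t j = (-1)^j * q^(2*j^2)" for j
  have q2: "norm (q^2) < 1" using q(2) by (simp add: norm_power power_less_one_iff)
  have Q: "Q \<noteq> 0" "norm Q < 1" using q q2 by (auto simp: Q_def norm_power power_less_one_iff)
  have w: "w \<noteq> 0" using q by (simp add: w_def)
  have Qp': "Q^n = q^(4*n)" for n unfolding Q_def by (rule Qp)
  have wp': "w^n = (-1)^n * q^(2*n)" for n unfolding w_def by (rule wp)
  have t1: "Q^(j*(j-1) div 2) * w^j = t j" for j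
  proof -
    have "Q^(j*(j-1) div 2) * w^j = (-1)^j * q^(4 * (j * (j - 1) div 2) + 2 * j)"
      unfolding Qp' wp' by (simp only: power_add mult.left_commute)
    then show ?thesis unfolding four_tri t_def .
  qed
  have t2: "Q^(Suc j * Suc (Suc j) div 2) / w^Suc j = t (Suc j)" for j
  proof -
    have "Q^(Suc j * Suc (Suc j) div 2) = q^(2 * (Suc j)^2) * q^(2 * Suc j)"
      unfolding Qp' four_tri2 power_add ..
    moreover have "w^Suc j = (-1)^Suc j * q^(2 * Suc j)" by (rule wp')
    moreover have "q^(2 * Suc j) \<noteq> 0" using q by simp
    ultimately show ?thesis unfolding t_def by (metis div_sign)
  qed
  have tb: "norm (t j) \<le> norm q ^ j" for j
  proof -
    have "norm (t j) = norm (q^(2*j^2))" unfolding t_def by (simp add: norm_mult norm_power)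
    also have "\<dots> \<le> norm q ^ j" by (rule pow_le_geo[OF q(2) j_le])
    finally show ?thesis .
  qed
  have tb2: "norm (t (Suc j)) \<le> norm q ^ j" for j
  proof -
    have "norm q ^ Suc j \<le> norm q ^ j" using q(2) by (intro power_decreasing) auto
    then show ?thesis using tb[of "Suc j"] by linarith
  qed
  have st: "summable (\<lambda>j. norm (t j))"
    by (rule summable_comparison_test'[OF summable_geometric[of "norm q"], of 0]) (use q tb in auto)
  have st2: "summable (\<lambda>j. norm (t (Suc j)))"
    by (rule summable_comparison_test'[OF summable_geometric[of "norm q"], of 0]) (use q tb2 in auto)
  have J: "qpoch_inf (-w) Q * qpoch_inf (-(Q/w)) Q * qpoch_inf Q Q = (\<Sum>j. t j) + (\<Sum>j. t (Suc j))"
    using jacobi_inf[OF Q w] st st2 unfolding t1 t2 by simp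
  have sh: "(\<Sum>j. t j) = 1 + (\<Sum>j. t (Suc j))"
    using suminf_split_head[OF summable_norm_cancel[OF st]] by (simp add: t_def)
  define A where "A = qpoch_inf (q^2) Q"
  define Q4 where "Q4 = qpoch_inf Q Q"
  define E where "E = qpoch_inf (q^2) (q^2)"
  define Y where "Y = qpoch_inf (-(q^2)) (q^2)"
  have e1: "-w = q^2" by (simp add: w_def)
  have e2: "-(Q/w) = q^2"
  proof -
    have a: "Q = q^2 * q^2" unfolding Q_def by (rule power2_eq_square)
    have b: "q^2 * q^2 / q^2 = q^2" by (rule nonzero_mult_div_cancel_right) (use q in simp)
    have c: "-(Q/w) = Q / q^2" unfolding w_def by (simp only: divide_minus_right minus_minus)
    have d: "Q / q^2 = q^2" unfolding a b ..
    show ?thesis unfolding c d ..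
  qed
  have main: "1 + 2 * (\<Sum>j. t (Suc j)) = A * A * Q4"
  proof -
    have "A * A * Q4 = (\<Sum>j. t j) + (\<Sum>j. t (Suc j))" using J unfolding e1 e2 A_def Q4_def .
    then show ?thesis unfolding sh by simp
  qed
  have sp: "E = A * Q4" unfolding E_def A_def Q4_def Q_def using qpoch_split[OF q2, of "q^2"]
    by (simp only: power2_eq_square)
  have pm: "E * Y = Q4" unfolding E_def Y_def Q4_def Q_def using qpoch_pm[OF q2, of "q^2"] .
  have Q4nz: "Q4 \<noteq> 0" unfolding Q4_def
  proof (rule nz_qp[OF Q(2)])
    fix j show "Q * Q^j \<noteq> 1"
    proof
      assume "Q * Q^j = 1"
      then have "norm Q ^ Suc j = 1" by (metis norm_one norm_power power_Suc)
      moreover have "norm Q ^ Suc j < 1" using Q by (intro power_less_one_iff[THEN iffD2]) auto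
      ultimately show False by simp
    qed
  qed
  have "(A * Y) * Q4 = 1 * Q4" using sp pm by (metis mult.assoc mult.commute mult_1)
  then have AY: "A * Y = 1" using Q4nz by (rule mult_right_cancel[THEN iffD1, rotated])
  have Ynz: "Y \<noteq> 0" using AY by auto
  have A: "A = 1 / Y" using AY Ynz by (simp add: eq_divide_eq)
  have "1 + 2 * (\<Sum>j. t (Suc j)) = A * E" using main sp by (metis mult.assoc mult.commute)
  also have "\<dots> = E / Y" using A by simp
  finally show ?thesis unfolding t_def E_def Y_def .
qed



lemma expo_alt: "expo n m = ((n + 2*m)*(n + 2*m + 3) - 2*m) div 2"
proof -
  have "(n + 2*m)*(n + 2*m + 3) - 2*m = n*(n+3) + (2*n*m + 2*m*(m+1)) * 2"
    by (simp add: algebra_simps)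
  then show ?thesis unfolding expo_def by simp
qed

lemma expo1: "m \<le> k div 2 \<Longrightarrow> expo (int k - 2*int m) (int m) = int (k*(k+3) div 2 - m)"
proof -
  assume mk: "m \<le> k div 2"
  have a: "expo (int k - 2*int m) (int m) = (int k * (int k + 3) + (- int m) * 2) div 2"
    unfolding expo_alt by (simp add: algebra_simps)
  also have "\<dots> = int k * (int k + 3) div 2 - int m" by simp
  also have "int k * (int k + 3) div 2 = int (k*(k+3) div 2)" by (simp add: zdiv_int)
  also have "m \<le> k*(k+3) div 2"
  proof -
    have "k div 2 \<le> k*(k+3) div 2" by (intro div_le_mono) (simp add: algebra_simps)
    then show ?thesis using mk by simp
  qed
  then have "int (k*(k+3) div 2) - int m = int (k*(k+3) div 2 - m)" by simp
  finally show ?thesis .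
qed

lemma expo2: "expo (2*int \<mu> - int \<kappa> - 3) (- int \<mu>) = int ((\<kappa>+3)*\<kappa> div 2 + \<mu>)"
proof -
  have "expo (2*int \<mu> - int \<kappa> - 3) (- int \<mu>) = (int \<kappa> * (int \<kappa> + 3) + int \<mu> * 2) div 2"
    unfolding expo_alt by (simp add: algebra_simps)
  also have "\<dots> = int \<kappa> * (int \<kappa> + 3) div 2 + int \<mu>" by simp
  also have "int \<kappa> * (int \<kappa> + 3) div 2 = int ((\<kappa>+3)*\<kappa> div 2)" by (simp add: zdiv_int algebra_simps)
  finally show ?thesis by simp
qed

lemma neg1_powi_neg: "((-1::complex) powi (- int m)) = (-1)^m"
  by (cases "even m") (simp_all add: power_int_minus)

lemma tel1: "M \<le> K \<Longrightarrow> (1+q) * (\<Sum>m\<le>M. (-1)^m * (q::complex)^(K-m)) = q^(K+1) + (-1)^M * q^(K-M)"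
proof (induction M)
  case 0 then show ?case by (simp add: algebra_simps)
next
  case (Suc M)
  then have IH: "(1+q) * (\<Sum>m\<le>M. (-1)^m * q^(K-m)) = q^(K+1) + (-1)^M * q^(K-M)" by simp
  have e: "q^(K-M) = q * q^(K - Suc M)"
  proof -
    have "K - M = Suc (K - Suc M)" using Suc.prems by simp
    then show ?thesis by simp
  qed
  have "(1+q) * (\<Sum>m\<le>Suc M. (-1)^m * q^(K-m))
      = (1+q) * (\<Sum>m\<le>M. (-1)^m * q^(K-m)) + (1+q) * ((-1)^Suc M * q^(K - Suc M))"
    by (simp add: algebra_simps)
  also have "\<dots> = q^(K+1) + (-1)^M * q^(K-M) - (-1)^M * (q^(K - Suc M) + q^(K-M))"
    unfolding IH e by (simp add: algebra_simps)
  also have "\<dots> = q^(K+1) + (-1)^Suc M * q^(K - Suc M)" by (simp add: algebra_simps)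
  finally show ?case .
qed

lemma tel2: "(1+q) * (\<Sum>\<mu>\<in>{1..L}. (-1)^\<mu> * (q::complex)^(F+\<mu>)) = (-1)^L * q^(F+L+1) - q^(F+1)"
proof (induction L)
  case 0 then show ?case by simp
next
  case (Suc L)
  have "(1+q) * (\<Sum>\<mu>\<in>{1..Suc L}. (-1)^\<mu> * q^(F+\<mu>))
      = (1+q) * (\<Sum>\<mu>\<in>{1..L}. (-1)^\<mu> * q^(F+\<mu>)) + (1+q) * ((-1)^Suc L * q^(F + Suc L))"
    by (simp add: algebra_simps)
  also have "\<dots> = (-1)^L * q^(F+L+1) - q^(F+1) - (-1)^L * (q^(F+L+1) + q^(F + L + 2))"
    unfolding Suc.IH by (simp add: algebra_simps)
  also have "\<dots> = (-1)^Suc L * q^(F + Suc L + 1) - q^(F+1)" by (simp add: algebra_simps)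
  finally show ?case .
qed

lemma geo2_summable:
  fixes r :: real
  assumes r: "0 \<le> r" "r < 1"
  shows "(\<lambda>(k,m). r^k * r^m) summable_on (UNIV \<times> (UNIV :: nat set))"
proof -
  have inner: "((\<lambda>m. r^k * r^m) has_sum (r^k * (1/(1-r)))) UNIV" for k
  proof (rule sums_nonneg_imp_has_sum)
    show "(\<lambda>m. r^k * r^m) sums (r^k * (1/(1-r)))"
      by (intro sums_mult geometric_sums) (use r in auto)
  qed (use r in auto)
  have outer: "(\<lambda>k. r^k * (1/(1-r))) summable_on UNIV"
    by (rule summable_nonneg_imp_summable_on) (use r in \<open>auto intro!: summable_mult2 summable_geometric\<close>)
  show ?thesis
    by (rule summable_on_SigmaI[where g="\<lambda>k. r^k * (1/(1-r))"]) (use inner outer r in auto)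
qed

lemma region_sum:
  fixes F :: "nat \<times> nat \<Rightarrow> complex" and B :: "nat \<Rightarrow> nat set" and r :: real
  assumes fin: "\<And>k. finite (B k)"
    and bound: "\<And>k m. m \<in> B k \<Longrightarrow> norm (F (k,m)) \<le> r^k * r^m"
    and r: "0 \<le> r" "r < 1"
  shows "(F has_sum (\<Sum>k. \<Sum>m\<in>B k. F (k,m))) (Sigma UNIV B)"
    and "summable (\<lambda>k. \<Sum>m\<in>B k. F (k,m))"
proof -
  have "(\<lambda>(k,m). r^k * r^m) summable_on Sigma UNIV B"
    by (rule summable_on_subset_banach[OF geo2_summable[OF r]]) auto
  then have "(\<lambda>x. norm (F x)) summable_on Sigma UNIV B"
    by (rule Infinite_Sum.abs_summable_on_comparison_test') (use bound in auto)
  then have sF: "F summable_on Sigma UNIV B" by (rule abs_summable_summable)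
  define S where "S = infsum F (Sigma UNIV B)"
  have hF: "(F has_sum S) (Sigma UNIV B)" using sF unfolding S_def by simp
  have hb: "((\<lambda>k. \<Sum>m\<in>B k. F (k,m)) has_sum S) UNIV"
    by (rule has_sum_SigmaD[OF hF]) (use fin in auto)
  then have sm: "(\<lambda>k. \<Sum>m\<in>B k. F (k,m)) sums S" by (rule has_sum_imp_sums)
  then show "summable (\<lambda>k. \<Sum>m\<in>B k. F (k,m))" by (rule sums_summable)
  from sm have "(\<Sum>k. \<Sum>m\<in>B k. F (k,m)) = S" by (rule sums_unique[symmetric])
  then show "(F has_sum (\<Sum>k. \<Sum>m\<in>B k. F (k,m))) (Sigma UNIV B)" using hF by simp
qed

lemma pow_norm_bound: "norm (q::complex) < 1 \<Longrightarrow> k + m \<le> e \<Longrightarrow> norm (c * q^e) \<le> norm c * (norm q ^ k * norm q ^ m)"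
proof -
  assume q: "norm q < 1" and e: "k + m \<le> e"
  have "norm (q^e) \<le> norm q ^ (k+m)" by (rule pow_le_geo[OF q e])
  then show ?thesis by (simp add: norm_mult power_add mult_left_mono)
qed

lemma region1:
  fixes q :: complex
  assumes q: "norm q < 1"
  defines "F \<equiv> (\<lambda>(k,m). (-1)^m * q^(k*(k+3) div 2 - m))"
  shows "((\<lambda>(n,m). (-1) powi m * q powi expo n m) has_sum (\<Sum>k. \<Sum>m\<le>k div 2. F (k,m))) {(n::int, m::int). 0 \<le> n \<and> 0 \<le> m}"
    and "summable (\<lambda>k. \<Sum>m\<le>k div 2. F (k,m))"
proof -
  have bnd: "norm (F (k,m)) \<le> norm q ^ k * norm q ^ m" if "m \<in> {..k div 2}" for k m
  proof -
    have "4*k div 2 \<le> k*(k+3) div 2" by (intro div_le_mono) (cases k, auto)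
    then have "k + m \<le> k*(k+3) div 2 - m" using that by auto
    then show ?thesis unfolding F_def using pow_norm_bound[OF q, of k m _ "(-1)^m"] by (simp add: norm_power)
  qed
  note R = region_sum[where F=F and B="\<lambda>k. {..k div 2}", OF _ bnd _ q, simplified]
  show "summable (\<lambda>k. \<Sum>m\<le>k div 2. F (k,m))" using R(2) by simp
  have eq: "((\<lambda>(n,m). (-1) powi m * q powi expo n m) has_sum s) {(n::int, m::int). 0 \<le> n \<and> 0 \<le> m}
        = (F has_sum s) (Sigma UNIV (\<lambda>k. {..k div 2}))" for s
  proof (rule has_sum_reindex_bij_witness[where i="\<lambda>(k,m). (int k - 2*int m, int m)" and j="\<lambda>(n,m). (nat (n+2*m), nat m)"])
    fix a :: "int \<times> int" assume "a \<in> {(n, m). 0 \<le> n \<and> 0 \<le> m}"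
    then obtain n m where a: "a = (n,m)" "0 \<le> n" "0 \<le> m" by auto
    show "(case (case a of (n, m) \<Rightarrow> (nat (n + 2 * m), nat m)) of (k, m) \<Rightarrow> (int k - 2 * int m, int m)) = a"
      using a by auto
    show "(case a of (n, m) \<Rightarrow> (nat (n + 2 * m), nat m)) \<in> Sigma UNIV (\<lambda>k. {..k div 2})"
      using a by auto
    have ex: "expo n m = int (nat (n+2*m) * (nat (n+2*m) + 3) div 2 - nat m)"
    proof -
      have "nat m \<le> nat (n+2*m) div 2" using a by simp
      from expo1[OF this] show ?thesis using a by simp
    qed
    show "F (case a of (n, m) \<Rightarrow> (nat (n + 2 * m), nat m)) = (case a of (n, m) \<Rightarrow> (- 1) powi m * q powi expo n m)"
    proof -
      have "m = int (nat m)" using a by simp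
      then have "(-1::complex) powi m = (-1)^(nat m)" by (metis power_int_of_nat)
      then show ?thesis using a unfolding F_def by (simp add: power_int_of_nat ex)
    qed
  next
    fix b :: "nat \<times> nat" assume "b \<in> Sigma UNIV (\<lambda>k. {..k div 2})"
    then obtain k m where b: "b = (k,m)" "m \<le> k div 2" by auto
    show "(case (case b of (k, m) \<Rightarrow> (int k - 2 * int m, int m)) of (n, m) \<Rightarrow> (nat (n + 2 * m), nat m)) = b"
      using b by auto
    show "(case b of (k, m) \<Rightarrow> (int k - 2 * int m, int m)) \<in> {(n, m). 0 \<le> n \<and> 0 \<le> m}"
      using b by auto
  qed simp
  show "((\<lambda>(n,m). (-1) powi m * q powi expo n m) has_sum (\<Sum>k. \<Sum>m\<le>k div 2. F (k,m))) {(n::int, m::int). 0 \<le> n \<and> 0 \<le> m}"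
    unfolding eq using R(1) by simp
qed

lemma region2:
  fixes q :: complex
  assumes q: "norm q < 1"
  defines "F \<equiv> (\<lambda>(k,m). (-1)^m * q^((k+3)*k div 2 + m))"
  shows "((\<lambda>(n,m). (-1) powi m * q powi expo n m) has_sum (\<Sum>k. \<Sum>m\<in>{1..(k+2) div 2}. F (k,m))) {(n::int, m::int). n < 0 \<and> m < 0}"
    and "summable (\<lambda>k. \<Sum>m\<in>{1..(k+2) div 2}. F (k,m))"
proof -
  have bnd: "norm (F (k,m)) \<le> norm q ^ k * norm q ^ m" if "m \<in> {1..(k+2) div 2}" for k m
  proof -
    have "2*k div 2 \<le> (k+3)*k div 2" by (intro div_le_mono) auto
    then have "k + m \<le> (k+3)*k div 2 + m" by auto
    then show ?thesis unfolding F_def using pow_norm_bound[OF q, of k m _ "(-1)^m"] by (simp add: norm_power)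
  qed
  note R = region_sum[where F=F and B="\<lambda>k. {1..(k+2) div 2}", OF _ bnd _ q, simplified]
  show "summable (\<lambda>k. \<Sum>m\<in>{1..(k+2) div 2}. F (k,m))" using R(2) by simp
  have eq: "((\<lambda>(n,m). (-1) powi m * q powi expo n m) has_sum s) {(n::int, m::int). n < 0 \<and> m < 0}
        = (F has_sum s) (Sigma UNIV (\<lambda>k. {1..(k+2) div 2}))" for s
  proof (rule has_sum_reindex_bij_witness[where i="\<lambda>(k,m). (2*int m - int k - 3, - int m)" and j="\<lambda>(n,m). (nat (-(n+2*m)) - 3, nat (-m))"])
    fix a :: "int \<times> int" assume "a \<in> {(n, m). n < 0 \<and> m < 0}"
    then obtain n m where a: "a = (n,m)" "n < 0" "m < 0" by auto
    show "(case (case a of (n, m) \<Rightarrow> (nat (-(n+2*m)) - 3, nat (-m))) of (k, m) \<Rightarrow> (2*int m - int k - 3, - int m)) = a"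
      using a by auto
    show "(case a of (n, m) \<Rightarrow> (nat (-(n+2*m)) - 3, nat (-m))) \<in> Sigma UNIV (\<lambda>k. {1..(k+2) div 2})"
      using a by auto
    have ex: "expo n m = int ((nat (-(n+2*m)) - 3 + 3) * (nat (-(n+2*m)) - 3) div 2 + nat (-m))"
    proof -
      have e: "2 * int (nat (-m)) - int (nat (-(n+2*m)) - 3) - 3 = n" "- int (nat (-m)) = m" using a by auto
      show ?thesis using expo2[of "nat (-m)" "nat (-(n+2*m)) - 3"] unfolding e .
    qed
    show "F (case a of (n, m) \<Rightarrow> (nat (-(n+2*m)) - 3, nat (-m))) = (case a of (n, m) \<Rightarrow> (- 1) powi m * q powi expo n m)"
    proof -
      have "m = - int (nat (-m))" using a by simp
      then have s: "(-1::complex) powi m = (-1)^(nat (-m))" by (metis neg1_powi_neg)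
      have p: "q powi expo n m = q ^ ((nat (-(n+2*m)) - 3 + 3) * (nat (-(n+2*m)) - 3) div 2 + nat (-m))"
        unfolding ex by (rule power_int_of_nat)
      show ?thesis using a unfolding F_def by (simp only: s p case_prod_conv)
    qed
  next
    fix b :: "nat \<times> nat" assume "b \<in> Sigma UNIV (\<lambda>k. {1..(k+2) div 2})"
    then obtain k m where b: "b = (k,m)" "1 \<le> m" "m \<le> (k+2) div 2" by auto
    show "(case (case b of (k, m) \<Rightarrow> (2*int m - int k - 3, - int m)) of (n, m) \<Rightarrow> (nat (-(n+2*m)) - 3, nat (-m))) = b"
      using b by auto
    show "(case b of (k, m) \<Rightarrow> (2*int m - int k - 3, - int m)) \<in> {(n, m). n < 0 \<and> m < 0}"
      using b by auto
  qed simp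
  show "((\<lambda>(n,m). (-1) powi m * q powi expo n m) has_sum (\<Sum>k. \<Sum>m\<in>{1..(k+2) div 2}. F (k,m))) {(n::int, m::int). n < 0 \<and> m < 0}"
    unfolding eq using R(1) by simp
qed



lemma K1: "Suc (Suc k) * Suc k div 2 = k*(k+3) div 2 + 1"
proof -
  have "Suc (Suc k) * Suc k = k*(k+3) + 1 * 2" by (simp add: algebra_simps)
  then show ?thesis by (metis div_mult_self3 zero_neq_numeral Suc_eq_plus1 add.commute)
qed
lemma K2: "Suc (Suc k) * Suc k div 2 = (k+3)*k div 2 + 1"
  using K1[of k] by (simp add: mult.commute)
lemma ce: "(2*t)*(2*t+3) div 2 - t = 2*t^2 + 2*(t::nat)"
proof -
  have "(2*t)*(2*t+3) = 2 * (t*(2*t+3))" by (simp add: algebra_simps)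
  then have "(2*t)*(2*t+3) div 2 = t*(2*t+3)" by simp
  then show ?thesis by (simp add: power2_eq_square algebra_simps)
qed
lemma co: "(2*t+1)*(2*t+1+3) div 2 - t = 2*(Suc t)^2"
proof -
  have "(2*t+1)*(2*t+1+3) = 2 * ((2*t+1)*(t+2))" by (simp add: algebra_simps)
  then have "(2*t+1)*(2*t+1+3) div 2 = (2*t+1)*(t+2)" by simp
  then show ?thesis by (simp add: power2_eq_square algebra_simps)
qed
lemma de: "(2 * v+3)*(2 * v) div 2 + (2 * v+2) div 2 + 1 = 2*(Suc v)^2"
proof -
  have "(2 * v+3)*(2 * v) = 2 * ((2 * v+3) * v)" by (simp add: algebra_simps)
  then have a: "(2 * v+3)*(2 * v) div 2 = (2 * v+3)* v" by simp
  have b: "(2 * v+2) div 2 = Suc v" by simp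
  show ?thesis unfolding a b by (simp add: power2_eq_square algebra_simps)
qed
lemma do: "(2 * v+1+3)*(2 * v+1) div 2 + (2 * v+1+2) div 2 + 1 = 2*(Suc v)^2 + 2 * Suc v"
proof -
  have "(2 * v+1+3)*(2 * v+1) = 2 * ((v+2)*(2 * v+1))" by (simp add: algebra_simps)
  then have a: "(2 * v+1+3)*(2 * v+1) div 2 = (v+2)*(2 * v+1)" by simp
  have b: "(2 * v+1+2) div 2 = Suc v" by simp
  show ?thesis unfolding a b by (simp add: power2_eq_square algebra_simps)
qed

lemma sum_even_odd: "(\<Sum>j<2*(n::nat). f j) = (\<Sum>j<n. f (2*j)) + (\<Sum>j<n. f (2*j+1))"
  by (induction n) (auto simp: algebra_simps)

lemma suminf_even_odd:
  fixes c :: "nat \<Rightarrow> complex"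
  assumes "summable c" "summable (\<lambda>t. c (2*t))" "summable (\<lambda>t. c (2*t+1))"
  shows "suminf c = (\<Sum>t. c (2*t)) + (\<Sum>t. c (2*t+1))"
proof -
  have "strict_mono (\<lambda>n::nat. 2*n)" by (auto simp: strict_mono_def)
  from LIMSEQ_subseq_LIMSEQ[OF summable_LIMSEQ[OF assms(1)] this]
  have a: "(\<lambda>n. \<Sum>j<2*n. c j) \<longlonglongrightarrow> suminf c" by (simp add: o_def)
  have b: "(\<lambda>n. \<Sum>j<2*n. c j) \<longlonglongrightarrow> (\<Sum>t. c (2*t)) + (\<Sum>t. c (2*t+1))"
    unfolding sum_even_odd by (intro tendsto_add summable_LIMSEQ assms(2,3))
  show ?thesis using LIMSEQ_unique[OF a b] .
qed

lemma geo_summable: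
  fixes f :: "nat \<Rightarrow> complex"
  assumes "norm (q::complex) < 1" "\<And>k. norm (f k) \<le> norm q ^ k" shows "summable f"
  by (rule summable_comparison_test'[OF summable_geometric[of "norm q"], of 0]) (use assms in auto)

lemma sgn_bound: "norm (q::complex) < 1 \<Longrightarrow> k \<le> e \<Longrightarrow> norm ((-1)^x * q^e) \<le> norm q ^ k"
  using pow_le_geo[of q k e] by (simp add: norm_mult norm_power)

lemma qpoch_00: "qpoch_inf 0 0 = 1"
  unfolding qpoch_inf_def by simp

lemma G_identity':
  fixes q :: complex
  assumes q: "norm q < 1"
  shows "(\<Sum>j. q^(Suc j * j div 2)) = qpoch_inf (q^2) (q^2) / qpoch_inf q (q^2)"
proof (cases "q = 0")
  case True
  have "(\<Sum>j. q^(Suc j * j div 2)) = (\<Sum>j\<in>{0}. q^(Suc j * j div 2))"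
  proof (rule suminf_finite)
    fix j :: nat assume "j \<notin> {0}"
    then have "0 < Suc j * j div 2" using tri_ge[of j] by simp
    then show "q^(Suc j * j div 2) = 0" using True by simp
  qed simp
  then show ?thesis using True by (simp add: qpoch_00)
next
  case False
  then show ?thesis using G_identity[OF False q] by simp
qed

lemma T_identity':
  fixes q :: complex
  assumes q: "norm q < 1"
  shows "1 + 2 * (\<Sum>j. (-1)^Suc j * q^(2*(Suc j)^2)) = qpoch_inf (q^2) (q^2) / qpoch_inf (-(q^2)) (q^2)"
proof (cases "q = 0")
  case True
  have z: "(-1)^Suc j * q^(2*(Suc j)^2) = 0" for j using True by (simp add: power2_eq_square)
  have "(\<Sum>j. (-1)^Suc j * q^(2*(Suc j)^2)) = 0" unfolding z by simp
  then show ?thesis using True by (simp add: qpoch_00)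
next
  case False
  then show ?thesis using T_identity[OF False q] by simp
qed

lemma main_series:
  fixes q :: complex
  assumes q: "norm q < 1"
  shows "(1+q) * ((\<Sum>\<^sub>\<infinity>(n, m)\<in>{(n::int, m::int). 0 \<le> n \<and> 0 \<le> m}. (-1) powi m * q powi expo n m)
       - (\<Sum>\<^sub>\<infinity>(n, m)\<in>{(n::int, m::int). n < 0 \<and> m < 0}. (-1) powi m * q powi expo n m))
       = 2 * (\<Sum>j. q^(Suc j * j div 2)) - (1 + 2 * (\<Sum>j. (-1)^Suc j * q^(2*(Suc j)^2)))"
proof -
  define g where "g j = q^(Suc j * j div 2)" for j
  define a where "a t = (-1)^t * q^(2*t^2 + 2*t)" for t
  define u where "u t = (-1)^t * q^(2*(Suc t)^2)" for t
  define c where "c k = (-1)^(k div 2) * q^(k*(k+3) div 2 - k div 2)" for k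
  define d where "d k = (-1)^((k+2) div 2) * q^((k+3)*k div 2 + (k+2) div 2 + 1)" for k
  define b1 where "b1 k = (\<Sum>m\<le>k div 2. (\<lambda>(k,m). (-1)^m * q^(k*(k+3) div 2 - m)) (k,m))" for k
  define b2 where "b2 k = (\<Sum>m\<in>{1..(k+2) div 2}. (\<lambda>(k,m). (-1)^m * q^((k+3)*k div 2 + m)) (k,m))" for k
  note R1 = region1[OF q] and R2 = region2[OF q]
  have I1: "(\<Sum>\<^sub>\<infinity>(n, m)\<in>{(n::int, m::int). 0 \<le> n \<and> 0 \<le> m}. (-1) powi m * q powi expo n m) = suminf b1"
    unfolding b1_def by (rule infsumI[OF R1(1)])
  have I2: "(\<Sum>\<^sub>\<infinity>(n, m)\<in>{(n::int, m::int). n < 0 \<and> m < 0}. (-1) powi m * q powi expo n m) = suminf b2"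
    unfolding b2_def by (rule infsumI[OF R2(1)])
  have sb1: "summable b1" unfolding b1_def using R1(2) .
  have sb2: "summable b2" unfolding b2_def using R2(2) .
  have cb1: "(1+q) * b1 k = g (Suc k) + c k" for k
  proof -
    have "k div 2 \<le> k*(k+3) div 2" by (intro div_le_mono) (simp add: algebra_simps)
    from tel1[OF this, of q] show ?thesis
      unfolding b1_def g_def c_def K1 by simp
  qed
  have cb2: "(1+q) * b2 k = d k - g (Suc k)" for k
    using tel2[where q=q and L="(k+2) div 2" and F="(k+3)*k div 2"] unfolding b2_def g_def d_def K2 by simp
  have gb: "norm (g k) \<le> norm q ^ k" for k unfolding g_def by (rule pow_le_geo[OF q tri_ge])
  have sg: "summable g" by (rule geo_summable[OF q gb])
  have sgs: "summable (\<lambda>k. g (Suc k))" using sg by (simp add: summable_Suc_iff)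
  have sa: "summable a"
  proof (rule geo_summable[OF q])
    fix t show "norm (a t) \<le> norm q ^ t" unfolding a_def by (rule sgn_bound[OF q]) simp
  qed
  have sas: "summable (\<lambda>k. a (Suc k))" using sa by (simp add: summable_Suc_iff)
  have su: "summable u"
  proof (rule geo_summable[OF q])
    fix t show "norm (u t) \<le> norm q ^ t" unfolding u_def
      by (rule sgn_bound[OF q]) (simp add: power2_eq_square)
  qed
  have ce2: "c (2*t) = a t" for t
  proof -
    have "(2*t) div 2 = t" by simp
    then show ?thesis unfolding c_def a_def using ce[of t] by simp
  qed
  have co2: "c (2*t+1) = u t" for t
  proof -
    have "(2*t+1) div 2 = t" by simp
    then show ?thesis unfolding c_def u_def using co[of t] by simp
  qed
  have de2: "d (2*t) = - u t" for t
  proof -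
    have "(2*t+2) div 2 = Suc t" by simp
    then show ?thesis unfolding d_def u_def using de[of t] by simp
  qed
  have do2: "d (2*t+1) = a (Suc t)" for t
  proof -
    have b: "(2*t+1+2) div 2 = Suc t" by simp
    have "d (2*t+1) = (-1)^((2*t+1+2) div 2) * q^((2*t+1+3)*(2*t+1) div 2 + (2*t+1+2) div 2 + 1)"
      unfolding d_def ..
    also have "\<dots> = (-1)^(Suc t) * q^(2*(Suc t)^2 + 2*Suc t)"
      by (subst do, subst b, rule refl)
    finally show ?thesis unfolding a_def .
  qed
  have sc: "summable c"
  proof -
    have "c = (\<lambda>k. (1+q) * b1 k - g (Suc k))" using cb1 by (auto simp: fun_eq_iff)
    then show ?thesis using summable_diff[OF summable_mult[OF sb1, of "1+q"] sgs] by simp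
  qed
  have sd: "summable d"
  proof -
    have "d = (\<lambda>k. (1+q) * b2 k + g (Suc k))" using cb2 by (auto simp: fun_eq_iff)
    then show ?thesis using summable_add[OF summable_mult[OF sb2, of "1+q"] sgs] by simp
  qed
  have Sc: "suminf c = suminf a + suminf u"
    using suminf_even_odd[OF sc] sa su unfolding ce2 co2 by simp
  have Sd: "suminf d = - suminf u + (\<Sum>t. a (Suc t))"
  proof -
    have "summable (\<lambda>t. - u t)" using su by (rule summable_minus)
    then have "suminf d = (\<Sum>t. - u t) + (\<Sum>t. a (Suc t))"
      using suminf_even_odd[OF sd] sas unfolding de2 do2 by simp
    then show ?thesis using suminf_minus[OF su] by simp
  qed
  have Sg: "(\<Sum>k. g (Suc k)) = suminf g - 1" using suminf_split_head[OF sg] by (simp add: g_def)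
  have Sa: "(\<Sum>k. a (Suc k)) = suminf a - 1" using suminf_split_head[OF sa] by (simp add: a_def)
  have E1: "(1+q) * suminf b1 = suminf g - 1 + suminf a + suminf u"
  proof -
    have "(1+q) * suminf b1 = (\<Sum>k. (1+q) * b1 k)" by (rule suminf_mult[OF sb1, symmetric])
    also have "\<dots> = (\<Sum>k. g (Suc k) + c k)" unfolding cb1 ..
    also have "\<dots> = (\<Sum>k. g (Suc k)) + suminf c" by (rule suminf_add[OF sgs sc, symmetric])
    finally show ?thesis unfolding Sg Sc by simp
  qed
  have E2: "(1+q) * suminf b2 = - suminf u + suminf a - 1 - (suminf g - 1)"
  proof -
    have "(1+q) * suminf b2 = (\<Sum>k. (1+q) * b2 k)" by (rule suminf_mult[OF sb2, symmetric])
    also have "\<dots> = (\<Sum>k. d k - g (Suc k))" unfolding cb2 ..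
    also have "\<dots> = suminf d - (\<Sum>k. g (Suc k))" by (rule suminf_diff[OF sd sgs, symmetric])
    finally show ?thesis unfolding Sg Sd Sa by simp
  qed
  have U: "(\<Sum>j. (-1)^Suc j * q^(2*(Suc j)^2)) = - suminf u"
  proof -
    have "(\<Sum>j. (-1)^Suc j * q^(2*(Suc j)^2)) = (\<Sum>j. - u j)" unfolding u_def by simp
    then show ?thesis using suminf_minus[OF su] by simp
  qed
  have "(1+q) * (suminf b1 - suminf b2) = (1+q) * suminf b1 - (1+q) * suminf b2"
    by (rule right_diff_distrib)
  also have "\<dots> = 2 * suminf g - (1 + 2 * (- suminf u))" unfolding E1 E2 by simp
  finally show ?thesis unfolding I1 I2 U g_def[symmetric] .
qed

theorem mainTheorem6:
  fixes q :: complex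
  assumes "norm q < 1"
  shows "(\<Sum>\<^sub>\<infinity>(n, m)\<in>{(n::int, m::int). 0 \<le> n \<and> 0 \<le> m}. (-1) powi m * q powi expo n m)
       - (\<Sum>\<^sub>\<infinity>(n, m)\<in>{(n::int, m::int). n < 0 \<and> m < 0}. (-1) powi m * q powi expo n m)
       = 2 * qpoch_inf (q^2) (q^2) / ((1 + q) * qpoch_inf q (q^2))
         - qpoch_inf (q^2) (q^2) / ((1 + q) * qpoch_inf (- (q^2)) (q^2))"
proof -
  define S where "S = (\<Sum>\<^sub>\<infinity>(n, m)\<in>{(n::int, m::int). 0 \<le> n \<and> 0 \<le> m}. (-1) powi m * q powi expo n m)
       - (\<Sum>\<^sub>\<infinity>(n, m)\<in>{(n::int, m::int). n < 0 \<and> m < 0}. (-1) powi m * q powi expo n m)"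
  define E where "E = qpoch_inf (q^2) (q^2)"
  define Yg where "Yg = qpoch_inf q (q^2)"
  define Y where "Y = qpoch_inf (- (q^2)) (q^2)"
  have nz: "1 + q \<noteq> 0"
  proof
    assume "1 + q = 0"
    then have "q = -1" by (simp add: add_eq_0_iff)
    then show False using assms by simp
  qed
  have "(1+q) * S = 2 * (E / Yg) - E / Y"
    using main_series[OF assms] unfolding G_identity'[OF assms] T_identity'[OF assms]
    unfolding S_def E_def Yg_def Y_def .
  then have "S = (2 * (E / Yg) - E / Y) / (1+q)" using nz by (simp add: eq_divide_eq mult.commute)
  also have "\<dots> = 2 * E / ((1+q) * Yg) - E / ((1+q) * Y)"
    by (simp add: diff_divide_distrib mult.commute)
  finally show ?thesis unfolding S_def E_def Yg_def Y_def .
qed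


end
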